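(* Let $(H,+,\circ)$ be a commutative multiplicative hyperring with identity $1$ such that $1+1\in U(H)$, and let $P$ be a nonzero sdf-absorbing strong $\mathcal{C}$-hyperideal of $H$. Then $P$ is a prime hyperideal of $H$.
   Context: A commutative multiplicative hyperring $(H,+,\circ)$ consists of an abelian group $(H,+)$ and an associative, commutative hyperoperation $\circ: H\times H\to P^*(H)$ with $x\circ(y+z)\subseteq x\circ y+x\circ z$ and $x\circ(-y)=-(x\circ y)=(-x)\circ y$. For subsets $A,B$, $A\circ B=\bigcup_{a\in A,b\in B}a\circ b$, $A\pm B=\{a\pm b\}$; $x^2=x\circ x$. Identity: $x\in x\circ 1$ for all $x$. $U(H)$ is the set of units, i.e. $x$ with $1\in x\circ y$ for some $y\in H$. A hyperideal is a nonempty $P$ with $x-y\in P$ and $r\circ x\subseteq P$ for $x,y\in P$, $r\in H$; it is prime if proper and $x\circ y\subseteq P$ implies $x\in P$ or $y\in P$. Let $\mathcal{C}=\{c_1\circ\cdots\circ c_n: c_i\in H\}$ and $\mathfrak{C}=\{\sum_{i=1}^m C_i: C_i\in\mathcal{C}\}$; $P$ is a strong $\mathcal{C}$-hyperideal if for every $D\in\mathfrak{C}$, $D\cap P\neq\varnothing$ implies $D\subseteq P$. A proper hyperideal $P$ is sdf-absorbing if whenever $0\neq x,y\in H$ and $x^2-y^2\subseteq P$, then $x-y\in P$ or $x+y\in P$. *)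

theory Defs
  imports Main
begin

text \<open>A commutative multiplicative hyperring: the abelian group (H,+) is the type 'a
  (class ab_group_add), and the hyperoperation is m :: 'a => 'a => 'a set.\<close>

definition hmul :: "('a \<Rightarrow> 'a \<Rightarrow> 'a set) \<Rightarrow> 'a set \<Rightarrow> 'a set \<Rightarrow> 'a set" where
  "hmul m A B = (\<Union>a\<in>A. \<Union>b\<in>B. m a b)"

definition sadd :: "'a::ab_group_add set \<Rightarrow> 'a set \<Rightarrow> 'a set" where
  "sadd A B = {a + b | a b. a \<in> A \<and> b \<in> B}"

definition ssub :: "'a::ab_group_add set \<Rightarrow> 'a set \<Rightarrow> 'a set" where
  "ssub A B = {a - b | a b. a \<in> A \<and> b \<in> B}"

definition comm_mult_hyperring :: "('a::ab_group_add \<Rightarrow> 'a \<Rightarrow> 'a set) \<Rightarrow> bool" where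
  "comm_mult_hyperring m \<longleftrightarrow>
     (\<forall>x y. m x y \<noteq> {}) \<and>
     (\<forall>x y z. hmul m (m x y) {z} = hmul m {x} (m y z)) \<and>
     (\<forall>x y. m x y = m y x) \<and>
     (\<forall>x y z. m x (y + z) \<subseteq> sadd (m x y) (m x z)) \<and>
     (\<forall>x y. m x (- y) = uminus ` (m x y) \<and> m (- x) y = uminus ` (m x y))"

definition hr_identity :: "('a \<Rightarrow> 'a \<Rightarrow> 'a set) \<Rightarrow> 'a \<Rightarrow> bool" where
  "hr_identity m e \<longleftrightarrow> (\<forall>x. x \<in> m x e)"

definition hr_units :: "('a \<Rightarrow> 'a \<Rightarrow> 'a set) \<Rightarrow> 'a \<Rightarrow> 'a set" where
  "hr_units m e = {x. \<exists>y. e \<in> m x y}"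

definition hyperideal :: "('a::ab_group_add \<Rightarrow> 'a \<Rightarrow> 'a set) \<Rightarrow> 'a set \<Rightarrow> bool" where
  "hyperideal m P \<longleftrightarrow> P \<noteq> {} \<and> (\<forall>x\<in>P. \<forall>y\<in>P. x - y \<in> P) \<and> (\<forall>r. \<forall>x\<in>P. m r x \<subseteq> P)"

definition prime_hyperideal :: "('a::ab_group_add \<Rightarrow> 'a \<Rightarrow> 'a set) \<Rightarrow> 'a set \<Rightarrow> bool" where
  "prime_hyperideal m P \<longleftrightarrow> hyperideal m P \<and> P \<noteq> UNIV \<and>
     (\<forall>x y. m x y \<subseteq> P \<longrightarrow> x \<in> P \<or> y \<in> P)"

inductive_set Cfam :: "('a \<Rightarrow> 'a \<Rightarrow> 'a set) \<Rightarrow> 'a set set" for m where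
  single: "{c} \<in> Cfam m"
| step: "A \<in> Cfam m \<Longrightarrow> hmul m A {c} \<in> Cfam m"

inductive_set CSums :: "('a::ab_group_add \<Rightarrow> 'a \<Rightarrow> 'a set) \<Rightarrow> 'a set set" for m where
  base: "A \<in> Cfam m \<Longrightarrow> A \<in> CSums m"
| step: "D \<in> CSums m \<Longrightarrow> A \<in> Cfam m \<Longrightarrow> sadd D A \<in> CSums m"

definition strong_C_hyperideal :: "('a::ab_group_add \<Rightarrow> 'a \<Rightarrow> 'a set) \<Rightarrow> 'a set \<Rightarrow> bool" where
  "strong_C_hyperideal m P \<longleftrightarrow> hyperideal m P \<and>
     (\<forall>D\<in>CSums m. D \<inter> P \<noteq> {} \<longrightarrow> D \<subseteq> P)"

definition sdf_absorbing :: "('a::ab_group_add \<Rightarrow> 'a \<Rightarrow> 'a set) \<Rightarrow> 'a set \<Rightarrow> bool" where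
  "sdf_absorbing m P \<longleftrightarrow> hyperideal m P \<and> P \<noteq> UNIV \<and>
     (\<forall>x y. x \<noteq> 0 \<longrightarrow> y \<noteq> 0 \<longrightarrow> ssub (m x x) (m y y) \<subseteq> P \<longrightarrow> x - y \<in> P \<or> x + y \<in> P)"

end

theory Submission
  imports Defs
begin

lemma cm_ne: "comm_mult_hyperring m \<Longrightarrow> m x y \<noteq> {}"
  by (simp add: comm_mult_hyperring_def)
lemma cm_assoc: "comm_mult_hyperring m \<Longrightarrow> hmul m (m x y) {z} = hmul m {x} (m y z)"
  by (simp add: comm_mult_hyperring_def)
lemma cm_comm: "comm_mult_hyperring m \<Longrightarrow> m x y = m y x"
  by (simp add: comm_mult_hyperring_def)
lemma cm_dist: "comm_mult_hyperring m \<Longrightarrow> m x (y + z) \<subseteq> sadd (m x y) (m x z)"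
  by (simp add: comm_mult_hyperring_def)
lemma cm_negr: "comm_mult_hyperring m \<Longrightarrow> m x (- y) = uminus ` (m x y)"
  by (simp add: comm_mult_hyperring_def)
lemma cm_negl: "comm_mult_hyperring m \<Longrightarrow> m (- x) y = uminus ` (m x y)"
  by (simp add: comm_mult_hyperring_def)

lemma sadd_mem: "z \<in> sadd A B \<Longrightarrow> \<exists>a b. z = a + b \<and> a \<in> A \<and> b \<in> B"
  by (auto simp: sadd_def)

lemma P_zero: "hyperideal m P \<Longrightarrow> 0 \<in> P"
  unfolding hyperideal_def by (metis all_not_in_conv diff_self)
lemma P_neg: "hyperideal m P \<Longrightarrow> x \<in> P \<Longrightarrow> - x \<in> P"
  using P_zero unfolding hyperideal_def by (metis diff_0)
lemma P_add: "hyperideal m P \<Longrightarrow> x \<in> P \<Longrightarrow> y \<in> P \<Longrightarrow> x + y \<in> P"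
  using P_neg unfolding hyperideal_def by (metis diff_minus_eq_add)
lemma P_sub: "hyperideal m P \<Longrightarrow> x \<in> P \<Longrightarrow> y \<in> P \<Longrightarrow> x - y \<in> P"
  unfolding hyperideal_def by blast
lemma P_mul: "hyperideal m P \<Longrightarrow> x \<in> P \<Longrightarrow> m r x \<subseteq> P"
  unfolding hyperideal_def by blast

lemma Cfam_ne: assumes cm: "comm_mult_hyperring m" and AA: "A \<in> Cfam m" shows "A \<noteq> {}"
  using AA
proof (induction A rule: Cfam.induct)
  case (single c) then show ?case by simp
next
  case (step A c)
  then obtain a where "a \<in> A" by blast
  then show ?case using cm_ne[OF cm, of a c] by (auto simp: hmul_def)
qed

lemma Cfam_neg: assumes cm: "comm_mult_hyperring m" and AA: "A \<in> Cfam m" shows "uminus ` A \<in> Cfam m"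
  using AA
proof (induction A rule: Cfam.induct)
  case (single c) then show ?case using Cfam.single[of "-c" m] by simp
next
  case (step A c)
  have "uminus ` hmul m A {c} = hmul m A {-c}"
    using cm_negr[OF cm] by (auto simp: hmul_def)
  then show ?case using Cfam.step[OF step(1)] by simp
qed

lemma diffP:
  assumes cm: "comm_mult_hyperring m" and s: "strong_C_hyperideal m P"
    and A: "A \<in> Cfam m" and a: "a \<in> A" and b: "b \<in> A"
  shows "a - b \<in> P"
proof -
  have hi: "hyperideal m P" using s by (simp add: strong_C_hyperideal_def)
  have D: "sadd A (uminus ` A) \<in> CSums m"
    using CSums.step[OF CSums.base[OF A] Cfam_neg[OF cm A]] .
  have "a + - a \<in> sadd A (uminus ` A)" using a unfolding sadd_def by blast
  then have "0 \<in> sadd A (uminus ` A)" by simp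
  then have "sadd A (uminus ` A) \<inter> P \<noteq> {}" using P_zero[OF hi] by blast
  then have "sadd A (uminus ` A) \<subseteq> P" using s D unfolding strong_C_hyperideal_def by blast
  moreover have "a + - b \<in> sadd A (uminus ` A)" using a b unfolding sadd_def by blast
  then have "a - b \<in> sadd A (uminus ` A)" by simp
  ultimately show ?thesis by blast
qed

lemma half:
  assumes cm: "comm_mult_hyperring m" and idn: "hr_identity m e"
    and u: "e + e \<in> hr_units m e" and s: "strong_C_hyperideal m P"
    and xx: "x + x \<in> P"
  shows "x \<in> P"
proof -
  have hi: "hyperideal m P" using s by (simp add: strong_C_hyperideal_def)
  obtain w where w: "e \<in> m (e + e) w" using u by (auto simp: hr_units_def)
  have "x \<in> m x e" using idn by (simp add: hr_identity_def)
  then have "x \<in> hmul m {x} (m (e + e) w)" using w by (auto simp: hmul_def)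
  then have "x \<in> hmul m (m x (e + e)) {w}" using cm_assoc[OF cm] by simp
  then obtain sx where sx: "sx \<in> m x (e + e)" and xs: "x \<in> m sx w" by (auto simp: hmul_def)
  obtain s1 s2 where s12: "sx = s1 + s2" "s1 \<in> m x e" "s2 \<in> m x e"
    using sadd_mem cm_dist[OF cm] sx by blast
  have "x \<in> m w (s1 + s2)" using xs s12 cm_comm[OF cm] by metis
  then obtain p1 p2 where p: "x = p1 + p2" "p1 \<in> m w s1" "p2 \<in> m w s2"
    using sadd_mem cm_dist[OF cm] by blast
  obtain q where q: "q \<in> m w (x + x)" using cm_ne[OF cm] by blast
  have qP: "q \<in> P" using q P_mul[OF hi xx] by blast
  obtain q1 q2 where qq: "q = q1 + q2" "q1 \<in> m w x" "q2 \<in> m w x"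
    using sadd_mem cm_dist[OF cm] q by blast
  define A where "A = hmul m (m w x) {e}"
  have AC: "A \<in> Cfam m"
  proof -
    have "hmul m {w} {x} = m w x" by (simp add: hmul_def)
    then show ?thesis unfolding A_def using Cfam.step[OF Cfam.step[OF Cfam.single]] by metis
  qed
  have memA: "p \<in> A" if "p \<in> m w si" "si \<in> m x e" for p si
  proof -
    have "p \<in> hmul m {w} (m x e)" using that by (auto simp: hmul_def)
    then show ?thesis unfolding A_def using cm_assoc[OF cm] by simp
  qed
  have memA2: "q' \<in> A" if "q' \<in> m w x" for q'
  proof -
    have "q' \<in> m q' e" using idn by (simp add: hr_identity_def)
    then show ?thesis using that unfolding A_def by (auto simp: hmul_def)
  qed
  have "p1 - q1 \<in> P" using diffP[OF cm s AC memA[OF p(2) s12(2)] memA2[OF qq(2)]] .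
  moreover have "p2 - q2 \<in> P" using diffP[OF cm s AC memA[OF p(3) s12(3)] memA2[OF qq(3)]] .
  moreover have "x = (p1 - q1) + (p2 - q2) + q" using p qq by simp
  ultimately show ?thesis using P_add[OF hi] qP by metis
qed

theorem mainTheorem13:
  fixes m :: "'a::ab_group_add \<Rightarrow> 'a \<Rightarrow> 'a set" and e :: 'a and P :: "'a set"
  assumes "comm_mult_hyperring m"
    and "hr_identity m e"
    and "e + e \<in> hr_units m e"
    and "sdf_absorbing m P"
    and "strong_C_hyperideal m P"
    and "P \<noteq> {0}"
  shows "prime_hyperideal m P"
proof -
  note cm = assms(1)
  have hi: "hyperideal m P" using assms(5) by (simp add: strong_C_hyperideal_def)
  have nU: "P \<noteq> UNIV" using assms(4) by (simp add: sdf_absorbing_def)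
  have sdf: "\<And>x y. x \<noteq> 0 \<Longrightarrow> y \<noteq> 0 \<Longrightarrow> ssub (m x x) (m y y) \<subseteq> P \<Longrightarrow> x - y \<in> P \<or> x + y \<in> P"
    using assms(4) by (simp add: sdf_absorbing_def)
  have mulP: "m r x \<subseteq> P" "m x r \<subseteq> P" if "x \<in> P" for x r
    using P_mul[OF hi that] cm_comm[OF cm] by metis+
  have sq: "x \<in> P" if xx: "m x x \<subseteq> P" for x
  proof -
    obtain i where i: "i \<in> P" "i \<noteq> 0" using assms(6) P_zero[OF hi] by blast
    show ?thesis
    proof (cases "x + i = 0")
      case True
      then have "x = - i" by (simp add: add_eq_0_iff)
      then show ?thesis using P_neg[OF hi i(1)] by simp
    next
      case False
      have "ssub (m (x + i) (x + i)) (m i i) \<subseteq> P"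
      proof
        fix z assume "z \<in> ssub (m (x + i) (x + i)) (m i i)"
        then obtain sv r where z: "z = sv - r" "sv \<in> m (x + i) (x + i)" "r \<in> m i i"
          by (auto simp: ssub_def)
        obtain s1 s2 where s: "sv = s1 + s2" "s1 \<in> m (x + i) x" "s2 \<in> m (x + i) i"
          using sadd_mem cm_dist[OF cm] z(2) by blast
        have "s1 \<in> m x (x + i)" using s(2) cm_comm[OF cm] by metis
        then obtain a c where ac: "s1 = a + c" "a \<in> m x x" "c \<in> m x i"
          using sadd_mem cm_dist[OF cm] by blast
        have "a \<in> P" "c \<in> P" "s2 \<in> P" "r \<in> P" using ac xx s(3) z(3) mulP[OF i(1)] by blast+
        then show "z \<in> P" using z s ac P_add[OF hi] P_sub[OF hi] by metis
      qed
      then have "(x + i) - i \<in> P \<or> (x + i) + i \<in> P" using sdf False i(2) by blast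
      then show ?thesis
      proof
        assume "(x + i) - i \<in> P" then show ?thesis by simp
      next
        assume h: "(x + i) + i \<in> P"
        have "x = ((x + i) + i) - i - i" by simp
        then show ?thesis using h i(1) P_sub[OF hi] by metis
      qed
    qed
  qed
  have prime: "x \<in> P \<or> y \<in> P" if xy: "m x y \<subseteq> P" for x y
  proof (cases "x + y = 0 \<or> x - y = 0")
    case True
    have "m x x \<subseteq> P"
    proof
      fix a assume a: "a \<in> m x x"
      show "a \<in> P"
      proof (cases "x + y = 0")
        case True
        then have "y = - x" by (simp add: add_eq_0_iff)
        then have "- a \<in> m x y" using a cm_negr[OF cm] by auto
        then have "- (- a) \<in> P" using xy P_neg[OF hi] by blast
        then show ?thesis by simp
      next
        case False
        then have "y = x" using True by simp
        then show ?thesis using a xy by blast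
      qed
    qed
    then show ?thesis using sq by blast
  next
    case False
    then have u0: "x + y \<noteq> 0" and v0: "x + - y \<noteq> 0" by auto
    have "ssub (m (x + y) (x + y)) (m (x + - y) (x + - y)) \<subseteq> P"
    proof
      fix z assume "z \<in> ssub (m (x + y) (x + y)) (m (x + - y) (x + - y))"
      then obtain sv r where z: "z = sv - r" "sv \<in> m (x + y) (x + y)" "r \<in> m (x + - y) (x + - y)"
        by (auto simp: ssub_def)
      obtain s1 s2 where s: "sv = s1 + s2" "s1 \<in> m (x + y) x" "s2 \<in> m (x + y) y"
        using sadd_mem cm_dist[OF cm] z(2) by blast
      have "s1 \<in> m x (x + y)" using s(2) cm_comm[OF cm] by metis
      then obtain a c where ac: "s1 = a + c" "a \<in> m x x" "c \<in> m x y"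
        using sadd_mem cm_dist[OF cm] by blast
      have "s2 \<in> m y (x + y)" using s(3) cm_comm[OF cm] by metis
      then obtain c' b where cb: "s2 = c' + b" "c' \<in> m y x" "b \<in> m y y"
        using sadd_mem cm_dist[OF cm] by blast
      obtain r1 r2 where r: "r = r1 + r2" "r1 \<in> m (x + - y) x" "r2 \<in> m (x + - y) (- y)"
        using sadd_mem cm_dist[OF cm] z(3) by blast
      have "r1 \<in> m x (x + - y)" using r(2) cm_comm[OF cm] by metis
      then obtain a' d where ad: "r1 = a' + d" "a' \<in> m x x" "d \<in> m x (- y)"
        using sadd_mem cm_dist[OF cm] by blast
      have "r2 \<in> m (- y) (x + - y)" using r(3) cm_comm[OF cm] by metis
      then obtain d' b' where db: "r2 = d' + b'" "d' \<in> m (- y) x" "b' \<in> m (- y) (- y)"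
        using sadd_mem cm_dist[OF cm] by blast
      have mxy: "m y x \<subseteq> P" using xy cm_comm[OF cm] by metis
      have cP: "c \<in> P" "c' \<in> P" using ac cb xy mxy by blast+
      have dP: "d \<in> P" using ad(3) cm_negr[OF cm] xy P_neg[OF hi] by auto
      have d'P: "d' \<in> P" using db(2) cm_negl[OF cm] mxy P_neg[OF hi] by auto
      have "m (- y) (- y) = m y y" using cm_negl[OF cm] cm_negr[OF cm] by (simp add: image_image)
      then have b'y: "b' \<in> m y y" using db(3) by simp
      have "m x x = hmul m {x} {x}" "m y y = hmul m {y} {y}" by (simp_all add: hmul_def)
      then have CC: "m x x \<in> Cfam m" "m y y \<in> Cfam m" using Cfam.step[OF Cfam.single] by metis+
      have "a - a' \<in> P" using diffP[OF cm assms(5) CC(1) ac(2) ad(2)] .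
      moreover have "b - b' \<in> P" using diffP[OF cm assms(5) CC(2) cb(3) b'y] .
      moreover have "z = (a - a') + (b - b') + c + c' - d - d'"
        using z s ac cb r ad db by (simp add: algebra_simps)
      ultimately show "z \<in> P" using cP dP d'P P_add[OF hi] P_sub[OF hi] by metis
    qed
    then have "(x + y) - (x + - y) \<in> P \<or> (x + y) + (x + - y) \<in> P" using sdf u0 v0 by blast
    then show ?thesis
    proof
      assume "(x + y) - (x + - y) \<in> P"
      then have "y + y \<in> P" by (simp add: algebra_simps)
      then show ?thesis using half[OF cm assms(2,3,5)] by blast
    next
      assume "(x + y) + (x + - y) \<in> P"
      then have "x + x \<in> P" by (simp add: algebra_simps)
      then show ?thesis using half[OF cm assms(2,3,5)] by blast
    qed
  qed
  show ?thesis unfolding prime_hyperideal_def using hi nU prime by blast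
qed

end
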